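(* Let $0\le\gamma_1<\dots<\gamma_p\le1$, $\boldsymbol\alpha=(\alpha_1,\dots,\alpha_p)\in(0,1)^p$ with $\sum_i\alpha_i=1$, and for each $i$ let $(\gamma_{i,n})_n$ be $[0,1]$-valued with $|\gamma_{i,n}-\gamma_i|=O(1/n)$. Let $\phi_{n,\boldsymbol\alpha,\boldsymbol\gamma_n}(u)=\sum_{i=1}^p\alpha_i\phi_{n,\gamma_{i,n}}(u)$. Then for every $\epsilon>0$ there exists $N\in\mathbb{N}$ such that for all $n\ge N$, $\phi_{n,\boldsymbol\alpha,\boldsymbol\gamma_n}'$ is convex on each of the nonempty intervals $[0,\gamma_1-\epsilon]$, $[\gamma_i+\epsilon,\gamma_{i+1}-\epsilon]$ ($1\le i\le p-1$), and $[\gamma_p+\epsilon,1]$.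
   Context: $[x]$ is the integer part. $\phi_{n,\alpha}(t)=\sum_{j=1+[(n-1)\alpha]}^n\binom{n}{j}t^j(1-t)^{n-j}$, $t\in[0,1]$. *)

theory Defs
  imports "HOL-Analysis.Analysis" "HOL-Library.Landau_Symbols"
begin

definition phi :: "nat \<Rightarrow> real \<Rightarrow> real \<Rightarrow> real" where
  "phi n a t = (\<Sum>j = nat (1 + \<lfloor>(real n - 1) * a\<rfloor>)..n.
       real (n choose j) * t ^ j * (1 - t) ^ (n - j))"

definition phi_mix :: "nat \<Rightarrow> (nat \<Rightarrow> real) \<Rightarrow> (nat \<Rightarrow> nat \<Rightarrow> real) \<Rightarrow> nat \<Rightarrow> real \<Rightarrow> real" where
  "phi_mix p alpha gam n u = (\<Sum>i = 1..p. alpha i * phi n (gam i n) u)"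

end

theory Submission imports Defs begin

definition E :: "nat \<Rightarrow> nat \<Rightarrow> real \<Rightarrow> real" where
  "E m i t = real (m choose i) * t^i * (1-t)^(m-i)"

lemma tele: "k \<le> m \<Longrightarrow> (\<Sum>i=k..m. f i - f (Suc i)) = f k - (f (Suc m) :: real)"
proof (induction m rule: dec_induct)
  case base then show ?case by simp
next
  case (step n) then show ?case by (simp add: sum.cl_ivl_Suc)
qed

lemma T_deriv:
  assumes "i \<le> m"
  shows "((\<lambda>t. real (Suc m choose Suc i) * t^Suc i * (1-t)^(Suc m - Suc i)) has_real_derivative
     real (Suc m) * (E m i t - E m (Suc i) t)) (at t)"
proof -
  have h: "((\<lambda>t. real (Suc m choose Suc i) * t^Suc i * (1-t)^(m - i)) has_real_derivative
     real (Suc m choose Suc i) * (real (Suc i) * t^i * (1-t)^(m-i) - t^Suc i * (real (m-i) * (1-t)^(m-i-1)))) (at t)"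
    apply (rule derivative_eq_intros refl)+
    apply (simp add: algebra_simps)
    done
  have c1: "real (Suc m choose Suc i) * real (Suc i) = real (Suc m) * real (m choose i)"
    using Suc_times_binomial[of i m] by (metis mult.commute of_nat_mult)
  have c2: "real (Suc m choose Suc i) * real (m - i) = real (Suc m) * real (m choose Suc i)"
    using binomial_absorb_comp[of "Suc m" "Suc i"] by (metis diff_Suc_Suc diff_Suc_1 mult.commute of_nat_mult)
  have "real (Suc m choose Suc i) * (real (Suc i) * t^i * (1-t)^(m-i) - t^Suc i * (real (m-i) * (1-t)^(m-i-1)))
      = (real (Suc m choose Suc i) * real (Suc i)) * t^i * (1-t)^(m-i) - (real (Suc m choose Suc i) * real (m - i)) * t^Suc i * (1-t)^(m - Suc i)"
    by (simp add: algebra_simps)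
  also have "\<dots> = real (Suc m) * (E m i t - E m (Suc i) t)"
    unfolding c1 c2 E_def by (simp add: algebra_simps)
  finally show ?thesis using h by simp
qed

lemma phi_deriv:
  assumes "0 \<le> a" "a \<le> 1"
  shows "(phi (Suc m) a has_real_derivative real (Suc m) * E m (nat \<lfloor>real m * a\<rfloor>) t) (at t)"
proof -
  define k where "k = nat \<lfloor>real m * a\<rfloor>"
  have fl: "0 \<le> \<lfloor>real m * a\<rfloor>" using assms by simp
  have km: "k \<le> m"
  proof -
    have "\<lfloor>real m * a\<rfloor> \<le> \<lfloor>real m\<rfloor>" using assms by (intro floor_mono) (simp add: mult_left_le)
    then show ?thesis unfolding k_def by simp
  qed
  have K: "nat (1 + \<lfloor>(real (Suc m) - 1) * a\<rfloor>) = Suc k" unfolding k_def using fl by (simp add: Suc_nat_eq_nat_zadd1 add.commute)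
  have eq: "phi (Suc m) a = (\<lambda>t. \<Sum>i=k..m. real (Suc m choose Suc i) * t^Suc i * (1-t)^(Suc m - Suc i))"
    by (rule ext) (simp only: phi_def K sum.shift_bounds_cl_Suc_ivl)
  have "((\<lambda>t. \<Sum>i=k..m. real (Suc m choose Suc i) * t^Suc i * (1-t)^(Suc m - Suc i)) has_real_derivative
     (\<Sum>i=k..m. real (Suc m) * (E m i t - E m (Suc i) t))) (at t)"
    by (intro DERIV_sum T_deriv) simp
  also have "(\<Sum>i=k..m. real (Suc m) * (E m i t - E m (Suc i) t)) = real (Suc m) * (E m k t - E m (Suc m) t)"
    using tele[OF km, of "\<lambda>i. E m i t"] by (simp add: sum_distrib_left[symmetric])
  also have "E m (Suc m) t = 0" by (simp add: E_def)
  finally show ?thesis unfolding eq k_def by simp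
qed


lemma L1: "(t::real) \<noteq> 0 \<Longrightarrow> real a * t^(a-1) = real a * t^a / t"
  by (cases a) auto

lemma beta_convex:
  fixes a b :: nat and lo hi :: real
  assumes lo: "0 \<le> lo" and hi: "hi \<le> 1"
    and cond: "\<forall>t\<in>{lo..hi}. real (a+b) \<le> (real a - real (a+b)*t)^2"
  shows "convex_on {lo..hi} (\<lambda>t. t^a * (1-t)^b)"
proof -
  define g' where "g' t = real a * t^(a-1) * (1-t)^b - real b * t^a * (1-t)^(b-1)" for t :: real
  define h where "h t = t^a * (1-t)^b * (real a / t - real b / (1-t))" for t :: real
  have gd: "((\<lambda>t. t^a * (1-t)^b) has_real_derivative g' x) (at x)" for x
    unfolding g'_def
    apply (rule derivative_eq_intros refl)+
    apply (simp add: algebra_simps)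
    done
  have gh: "g' t = h t" if "t \<in> {0<..<1}" for t
  proof -
    have t0: "t \<noteq> 0" and t1: "1 - t \<noteq> 0" using that by auto
    have "real a * t^(a-1) * (1-t)^b = real a * t^a / t * (1-t)^b" using L1[OF t0] by simp
    moreover have "real b * t^a * (1-t)^(b-1) = t^a * (real b * (1-t)^(b-1))" by simp
    moreover have "\<dots> = t^a * (real b * (1-t)^b / (1-t))" using L1[OF t1, of b] by simp
    ultimately show ?thesis unfolding g'_def h_def by (simp only:) (simp add: algebra_simps)
  qed
  have g'cont: "continuous_on S g'" for S unfolding g'_def by (intro continuous_intros)
  have mono: "g' x \<le> g' y" if xy: "x \<in> {lo..hi}" "y \<in> {lo..hi}" "x \<le> y" for x y
  proof (rule DERIV_nonneg_imp_increasing_open[OF xy(3)])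
    show "continuous_on {x..y} g'" by (rule g'cont)
  next
    fix s assume s: "x < s" "s < y"
    have s0: "0 < s" and s1: "s < 1" using s xy lo hi by auto
    have sI: "s \<in> {lo..hi}" using s xy by auto
    define D where "D = s^a * (1-s)^b * ((real a / s - real b / (1-s))^2 - real a / s^2 - real b / (1-s)^2)"
    have hd: "(h has_real_derivative D) (at s)"
    proof -
      have qd: "((\<lambda>t. real a / t - real b / (1-t)) has_real_derivative
          (- (real a / s^2) - real b / (1-s)^2)) (at s)"
      proof -
        have d1: "((\<lambda>t. real a / t) has_real_derivative (- (real a / s^2))) (at s)"
          using DERIV_cmult[OF DERIV_inverse[of s], of "real a"] s0
          by (simp add: divide_inverse power2_eq_square)
        have d2: "((\<lambda>t. real b / (1-t)) has_real_derivative (real b / (1-s)^2)) (at s)"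
        proof -
          have d0: "((\<lambda>t. 1 - t) has_real_derivative (-1)) (at s)"
            by (auto intro!: derivative_eq_intros)
          have "((\<lambda>t. inverse (1-t)) has_real_derivative (- ((-1) * inverse ((1-s) ^ Suc (Suc 0))))) (at s)"
            by (rule DERIV_inverse_fun[OF d0]) (use s1 in simp)
          from DERIV_cmult[OF this, of "real b"] show ?thesis
            by (simp add: divide_inverse power2_eq_square)
        qed
        show ?thesis using DERIV_diff[OF d1 d2] by simp
      qed
      from DERIV_mult[OF gd[of s] qd]
      have "(h has_real_derivative g' s * (real a / s - real b / (1-s)) + s^a * (1-s)^b * (- (real a / s^2) - real b / (1-s)^2)) (at s)"
        unfolding h_def by (simp add: mult.commute)
      moreover have gs: "g' s = s^a * (1-s)^b * (real a / s - real b / (1-s))" using gh[of s] s0 s1 unfolding h_def by simp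
      moreover have "g' s * (real a / s - real b / (1-s)) + s^a * (1-s)^b * (- (real a / s^2) - real b / (1-s)^2) = D"
        unfolding D_def gs power2_eq_square by algebra
      ultimately show ?thesis by simp
    qed
    have g'd: "(g' has_real_derivative D) (at s)"
      by (rule has_field_derivative_transform_within_open[OF hd, of "{0<..<1}"])
         (use s0 s1 gh in auto)
    have num: "0 \<le> (real a * (1-s) - real b * s)^2 - real a * (1-s)^2 - real b * s^2"
    proof -
      have e: "real a * (1-s) - real b * s = real a - real (a+b) * s" by (simp add: algebra_simps)
      have "(1-s)^2 \<le> 1" "s^2 \<le> 1" using s0 s1 by (auto simp: power_le_one abs_square_le_1)
      then have "real a * (1-s)^2 \<le> real a" "real b * s^2 \<le> real b"
        by (simp_all add: mult_left_le)
      then have "real a * (1-s)^2 + real b * s^2 \<le> real (a+b)" by simp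
      moreover have "real (a+b) \<le> (real a - real (a+b) * s)^2" using cond sI by blast
      ultimately show ?thesis unfolding e by linarith
    qed
    have br: "(real a / s - real b / (1-s))^2 - real a / s^2 - real b / (1-s)^2
        = ((real a * (1-s) - real b * s)^2 - real a * (1-s)^2 - real b * s^2) / (s^2 * (1-s)^2)"
    proof -
      have ne: "s \<noteq> 0" "1 - s \<noteq> 0" using s0 s1 by auto
      show ?thesis using ne by (simp add: divide_simps power2_eq_square)
    qed
    have "0 \<le> D" unfolding D_def br using num s0 s1 by (intro mult_nonneg_nonneg divide_nonneg_pos) auto
    then show "\<exists>y. (g' has_real_derivative y) (at s) \<and> 0 \<le> y" using g'd by blast
  qed
  show ?thesis
    by (rule convex_on_realI[where f'=g']) (auto intro: gd mono)
qed


lemma convex_on_sum_fun: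
  assumes "finite S" "convex A" "\<And>i. i \<in> S \<Longrightarrow> convex_on A (f i)"
  shows "convex_on A (\<lambda>x. \<Sum>i\<in>S. f i x)"
  using assms(1,3)
proof (induction S rule: finite_induct)
  case empty then show ?case using assms(2) by (simp add: convex_on_const)
next
  case (insert j S) then show ?case by (simp add: convex_on_add)
qed

lemma gmono:
  assumes "\<forall>i\<in>{1..<p}. g i < (g (Suc i) :: real)" "1 \<le> i" "i \<le> j" "j \<le> p"
  shows "g i \<le> g j"
  using assms(3,4)
proof (induction j rule: dec_induct)
  case base then show ?case by simp
next
  case (step k)
  then have "k \<in> {1..<p}" using assms(2) by auto
  then have "g k < g (Suc k)" using assms(1) by blast
  then show ?case using step by simp
qed

lemma key:
  fixes c eps g gma t :: real and m :: nat
  assumes c: "c > 0" and e: "eps > 0" and g: "0 \<le> g"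
    and gr: "\<bar>g - gma\<bar> \<le> c * (1 / real (Suc m))"
    and t: "eps \<le> \<bar>t - gma\<bar>"
    and m1: "2 * (c + 1) / eps \<le> real m" and m2: "4 / eps^2 \<le> real m"
  shows "real m \<le> (real (nat \<lfloor>real m * g\<rfloor>) - real m * t)^2"
proof -
  define k where "k = real (nat \<lfloor>real m * g\<rfloor>)"
  have k: "k = of_int \<lfloor>real m * g\<rfloor>" unfolding k_def using g by simp
  have k1: "real m * g - 1 \<le> k" "k \<le> real m * g" unfolding k by linarith+
  have "c * (1 / real (Suc m)) * real m \<le> c" using c by (simp add: field_simps)
  then have cm: "\<bar>g - gma\<bar> * real m \<le> c" using gr
    by (meson dual_order.trans mult_right_mono of_nat_0_le_iff)
  have "eps * real m \<le> \<bar>t - gma\<bar> * real m" using t by (simp add: mult_right_mono)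
  also have "\<dots> \<le> \<bar>t - g\<bar> * real m + \<bar>g - gma\<bar> * real m"
    by (metis abs_triangle_ineq diff_add_cancel distrib_right mult_right_mono of_nat_0_le_iff add_diff_eq)
  finally have f: "eps * real m \<le> \<bar>t - g\<bar> * real m + \<bar>g - gma\<bar> * real m" .
  have "\<bar>real m * g - real m * t\<bar> = \<bar>t - g\<bar> * real m"
  proof -
    have "real m * g - real m * t = (g - t) * real m" by (simp add: algebra_simps)
    then show ?thesis by (simp add: abs_mult abs_minus_commute)
  qed
  then have "eps * real m - c \<le> \<bar>real m * g - real m * t\<bar>" using cm f by linarith
  then have A: "eps * real m - c - 1 \<le> \<bar>k - real m * t\<bar>" using k1 by linarith
  have "2 * (c+1) \<le> eps * real m" using m1 e by (simp add: field_simps)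
  then have B: "eps * real m / 2 \<le> \<bar>k - real m * t\<bar>" using A by (smt (verit) field_sum_of_halves)
  have "0 \<le> eps * real m / 2" using e by simp
  then have "(eps * real m / 2)^2 \<le> \<bar>k - real m * t\<bar>^2" using B by (intro power_mono)
  moreover have "real m \<le> (eps * real m / 2)^2"
  proof -
    have "4 \<le> eps^2 * real m" using m2 e by (simp add: field_simps)
    then have "4 * real m \<le> eps^2 * real m * real m" by (simp add: mult_right_mono)
    then show ?thesis by (simp add: power2_eq_square field_simps)
  qed
  ultimately show ?thesis unfolding k_def by simp
qed


theorem lemma5p3:
  fixes p :: nat and gamma alpha :: "nat \<Rightarrow> real" and gam :: "nat \<Rightarrow> nat \<Rightarrow> real"
  assumes p_pos: "p \<ge> 1"
    and gamma_mono: "\<forall>i\<in>{1..<p}. gamma i < gamma (Suc i)"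
    and gamma_lo: "0 \<le> gamma 1" and gamma_hi: "gamma p \<le> 1"
    and alpha_range: "\<forall>i\<in>{1..p}. 0 < alpha i \<and> alpha i < 1"
    and alpha_sum: "(\<Sum>i = 1..p. alpha i) = 1"
    and gam_range: "\<forall>i\<in>{1..p}. \<forall>n. 0 \<le> gam i n \<and> gam i n \<le> 1"
    and gam_rate: "\<forall>i\<in>{1..p}. (\<lambda>n. gam i n - gamma i) \<in> O(\<lambda>n. 1 / real n)"
  shows "\<forall>\<epsilon>>0. \<exists>N::nat. \<forall>n\<ge>N.
     convex_on {0 .. gamma 1 - \<epsilon>} (deriv (phi_mix p alpha gam n)) \<and>
     (\<forall>i\<in>{1..<p}. convex_on {gamma i + \<epsilon> .. gamma (Suc i) - \<epsilon>} (deriv (phi_mix p alpha gam n))) \<and>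
     convex_on {gamma p + \<epsilon> .. 1} (deriv (phi_mix p alpha gam n))"
proof (intro allI impI)
  fix eps :: real assume e: "eps > 0"
  define P where "P i n \<longleftrightarrow> (\<forall>t. eps \<le> \<bar>t - gamma i\<bar> \<longrightarrow>
      real (n-1) \<le> (real (nat \<lfloor>real (n-1) * gam i n\<rfloor>) - real (n-1) * t)^2)" for i n
  have ev: "\<forall>i\<in>{1..p}. eventually (\<lambda>n. P i n) sequentially"
  proof
    fix i assume i: "i \<in> {1..p}"
    have "(\<lambda>n. gam i n - gamma i) \<in> O(\<lambda>n. 1 / real n)" using gam_rate i by blast
    then obtain c where c: "c > 0"
      and evc: "eventually (\<lambda>n. norm (gam i n - gamma i) \<le> c * norm (1 / real n)) sequentially"
      by (rule landau_o.bigE)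
    define M where "M = max (2*(c+1)/eps) (4/eps^2)"
    have "eventually (\<lambda>n. n \<ge> Suc (nat \<lceil>M\<rceil>)) sequentially" by (rule eventually_ge_at_top)
    then show "eventually (\<lambda>n. P i n) sequentially" using evc
    proof eventually_elim
      case (elim n)
      then obtain m where n: "n = Suc m" and mM: "nat \<lceil>M\<rceil> \<le> m" by (cases n) auto
      have "M \<le> real m" using mM by linarith
      then have m1: "2*(c+1)/eps \<le> real m" and m2: "4/eps^2 \<le> real m" unfolding M_def by auto
      have gr: "\<bar>gam i n - gamma i\<bar> \<le> c * (1 / real (Suc m))" using elim(2) n by simp
      have g0: "0 \<le> gam i n" using gam_range i by blast
      show ?case unfolding P_def
      proof (intro allI impI)
        fix t assume t: "eps \<le> \<bar>t - gamma i\<bar>"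
        show "real (n-1) \<le> (real (nat \<lfloor>real (n-1) * gam i n\<rfloor>) - real (n-1) * t)^2"
          using key[OF c e g0 gr t m1 m2] n by simp
      qed
    qed
  qed
  have "eventually (\<lambda>n. (\<forall>i\<in>{1..p}. P i n) \<and> n \<ge> 1) sequentially"
    using eventually_ball_finite[OF _ ev] eventually_ge_at_top[of 1] by (auto intro: eventually_conj)
  then obtain N where N: "\<And>n. n \<ge> N \<Longrightarrow> (\<forall>i\<in>{1..p}. P i n) \<and> n \<ge> 1"
    by (auto simp: eventually_sequentially)
  show "\<exists>N::nat. \<forall>n\<ge>N.
     convex_on {0 .. gamma 1 - eps} (deriv (phi_mix p alpha gam n)) \<and>
     (\<forall>i\<in>{1..<p}. convex_on {gamma i + eps .. gamma (Suc i) - eps} (deriv (phi_mix p alpha gam n))) \<and>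
     convex_on {gamma p + eps .. 1} (deriv (phi_mix p alpha gam n))"
  proof (intro exI allI impI)
    fix n assume nN: "n \<ge> N"
    obtain m where n: "n = Suc m" using N[OF nN] by (cases n) auto
    have Pn: "\<forall>i\<in>{1..p}. P i (Suc m)" using N[OF nN] n by simp
    define kk where "kk i = nat \<lfloor>real m * gam i (Suc m)\<rfloor>" for i
    have Dr: "(phi_mix p alpha gam (Suc m) has_real_derivative
        (\<Sum>i=1..p. alpha i * (real (Suc m) * E m (kk i) t))) (at t)" for t
    proof -
      have eq: "phi_mix p alpha gam (Suc m) = (\<lambda>u. \<Sum>i=1..p. alpha i * phi (Suc m) (gam i (Suc m)) u)"
        by (rule ext) (simp add: phi_mix_def)
      show ?thesis unfolding eq kk_def
        by (intro DERIV_sum DERIV_cmult phi_deriv) (use gam_range in auto)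
    qed
    have Deq: "deriv (phi_mix p alpha gam (Suc m)) = (\<lambda>t. \<Sum>i=1..p. alpha i * (real (Suc m) * E m (kk i) t))"
      using Dr by (intro ext DERIV_imp_deriv)
    have conv: "convex_on {lo..hi} (deriv (phi_mix p alpha gam n))"
      if lo: "0 \<le> lo" and hi: "hi \<le> 1" and far: "\<forall>t\<in>{lo..hi}. \<forall>i\<in>{1..p}. eps \<le> \<bar>t - gamma i\<bar>" for lo hi
      unfolding n Deq
    proof (rule convex_on_sum_fun)
      fix i assume i: "i \<in> {1..p}"
      have km: "kk i \<le> m"
      proof -
        have "\<lfloor>real m * gam i (Suc m)\<rfloor> \<le> \<lfloor>real m\<rfloor>" using gam_range i
          by (intro floor_mono) (simp add: mult_left_le)
        then show ?thesis unfolding kk_def by simp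
      qed
      have bc: "convex_on {lo..hi} (\<lambda>t. t^(kk i) * (1-t)^(m - kk i))"
      proof (rule beta_convex[OF lo hi], intro ballI)
        fix t assume t: "t \<in> {lo..hi}"
        have "P i (Suc m)" using Pn i by blast
        then have Pi: "eps \<le> \<bar>t - gamma i\<bar> \<longrightarrow> real (Suc m - 1) \<le> (real (nat \<lfloor>real (Suc m - 1) * gam i (Suc m)\<rfloor>) - real (Suc m - 1) * t)^2"
          unfolding P_def by blast
        have "eps \<le> \<bar>t - gamma i\<bar>" using far t i by blast
        with Pi have "real m \<le> (real (kk i) - real m * t)^2"
          unfolding kk_def by simp
        then show "real (kk i + (m - kk i)) \<le> (real (kk i) - real (kk i + (m - kk i)) * t)^2"
          using km by simp
      qed
      have ai: "0 < alpha i" using alpha_range i by blast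
      have "0 \<le> alpha i * real (Suc m) * real (m choose kk i)" using ai by simp
      from convex_on_cmul[OF this bc]
      have cc: "convex_on {lo..hi} (\<lambda>t. alpha i * real (Suc m) * real (m choose kk i) * (t^(kk i) * (1-t)^(m - kk i)))" .
      have fe: "(\<lambda>t. alpha i * (real (Suc m) * E m (kk i) t)) = (\<lambda>t. alpha i * real (Suc m) * real (m choose kk i) * (t^(kk i) * (1-t)^(m - kk i)))"
        by (rule ext) (simp only: E_def mult.assoc)
      show "convex_on {lo..hi} (\<lambda>t. alpha i * (real (Suc m) * E m (kk i) t))"
        unfolding fe by (rule cc)
    qed auto
    have gm: "gamma i \<le> gamma j" if "1 \<le> i" "i \<le> j" "j \<le> p" for i j
      using gmono[OF gamma_mono that] .
    have g1p: "gamma 1 \<le> gamma p" using gm[of 1 p] p_pos by simp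
    show "convex_on {0 .. gamma 1 - eps} (deriv (phi_mix p alpha gam n)) \<and>
     (\<forall>i\<in>{1..<p}. convex_on {gamma i + eps .. gamma (Suc i) - eps} (deriv (phi_mix p alpha gam n))) \<and>
     convex_on {gamma p + eps .. 1} (deriv (phi_mix p alpha gam n))"
    proof (intro conjI ballI)
      show "convex_on {0 .. gamma 1 - eps} (deriv (phi_mix p alpha gam n))"
      proof (rule conv)
        show "gamma 1 - eps \<le> 1" using g1p gamma_hi e by linarith
        show "\<forall>t\<in>{0..gamma 1 - eps}. \<forall>j\<in>{1..p}. eps \<le> \<bar>t - gamma j\<bar>"
        proof (intro ballI)
          fix t j assume t: "t \<in> {0..gamma 1 - eps}" and j: "j \<in> {1..p}"
          have "gamma 1 \<le> gamma j" using gm[of 1 j] j by simp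
          then show "eps \<le> \<bar>t - gamma j\<bar>" using t by auto
        qed
      qed simp
    next
      show "convex_on {gamma p + eps .. 1} (deriv (phi_mix p alpha gam n))"
      proof (rule conv)
        show "0 \<le> gamma p + eps" using g1p gamma_lo e by linarith
        show "\<forall>t\<in>{gamma p + eps..1}. \<forall>j\<in>{1..p}. eps \<le> \<bar>t - gamma j\<bar>"
        proof (intro ballI)
          fix t j assume t: "t \<in> {gamma p + eps..1}" and j: "j \<in> {1..p}"
          have "gamma j \<le> gamma p" using gm[of j p] j by simp
          then show "eps \<le> \<bar>t - gamma j\<bar>" using t by auto
        qed
      qed simp
    next
      fix i assume i: "i \<in> {1..<p}"
      show "convex_on {gamma i + eps .. gamma (Suc i) - eps} (deriv (phi_mix p alpha gam n))"
      proof (rule conv)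
        show "0 \<le> gamma i + eps" using gm[of 1 i] i gamma_lo e by auto
        show "gamma (Suc i) - eps \<le> 1" using gm[of "Suc i" p] i gamma_hi e by auto
        show "\<forall>t\<in>{gamma i + eps..gamma (Suc i) - eps}. \<forall>j\<in>{1..p}. eps \<le> \<bar>t - gamma j\<bar>"
        proof (intro ballI)
          fix t j assume t: "t \<in> {gamma i + eps..gamma (Suc i) - eps}" and j: "j \<in> {1..p}"
          show "eps \<le> \<bar>t - gamma j\<bar>"
          proof (cases "j \<le> i")
            case True
            then have "gamma j \<le> gamma i" using gm[of j i] i j by simp
            then show ?thesis using t by auto
          next
            case False
            then have "gamma (Suc i) \<le> gamma j" using gm[of "Suc i" j] j by simp
            then show ?thesis using t by auto
          qed
        qed
      qed
    qed
  qed
qed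

end
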